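(* The size of the smallest string attractor of the length-$n$ prefix $\mathbf{vtm}[0..n-1]$ of the ternary word $\mathbf{vtm}$ is $$\begin{cases}1,& n=1;\\ 2,& n=2;\\ 3,& 3\le n\le 6;\\ 4,& n\ge 7.\end{cases}$$
   Context: The word $\mathbf{vtm}=210201\cdots$ is the infinite fixed point, starting with $2$, of the morphism $2\mapsto 210$, $1\mapsto 20$, $0\mapsto 1$; it is indexed starting at $0$. A string attractor of a finite word $w=w[0..n-1]$ is a set $S\subseteq\{0,\ldots,n-1\}$ such that every nonempty factor $f$ of $w$ has an occurrence $w[p..q]=f$ with $p\le i\le q$ for some $i\in S$. *)

theory Defs
  imports Main
begin

fun vtm_morph :: "nat \<Rightarrow> nat list" where
  "vtm_morph a = (if a = 2 then [2,1,0] else if a = 1 then [2,0] else [1])"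

definition vtm_iter :: "nat \<Rightarrow> nat list" where
  "vtm_iter k = ((\<lambda>w. concat (map vtm_morph w)) ^^ k) [2]"

text \<open>The fixed point starting with 2: the k-th iterate of [2] is a prefix of the next one
  and has length at least k+1, so position i is already determined in iterate i+1.\<close>
definition vtm :: "nat \<Rightarrow> nat" where
  "vtm i = vtm_iter (Suc i) ! i"

definition vtm_prefix :: "nat \<Rightarrow> nat list" where
  "vtm_prefix n = map vtm [0..<n]"

text \<open>Factor w[p..q] (0-based, inclusive).\<close>
definition factor :: "'a list \<Rightarrow> nat \<Rightarrow> nat \<Rightarrow> 'a list" where
  "factor w p q = take (Suc q - p) (drop p w)"

definition string_attractor :: "'a list \<Rightarrow> nat set \<Rightarrow> bool" where
  "string_attractor w S \<longleftrightarrow> S \<subseteq> {..<length w} \<and>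
     (\<forall>p q. p \<le> q \<and> q < length w \<longrightarrow>
        (\<exists>p' q'. p' \<le> q' \<and> q' < length w \<and> factor w p' q' = factor w p q \<and>
                 (\<exists>i\<in>S. p' \<le> i \<and> i \<le> q')))"

definition min_attractor_size :: "'a list \<Rightarrow> nat" where
  "min_attractor_size w = (LEAST k. \<exists>S. string_attractor w S \<and> card S = k)"

end

theory Submission imports Defs begin

fun tm :: "nat \<Rightarrow> bool" where
  "tm n = (if n = 0 then False else (tm (n div 2) \<noteq> odd n))"

declare tm.simps[simp del]

lemma tm0[simp]: "tm 0 = False" by (simp add: tm.simps)
lemma tm_even[simp]: "tm (2*n) = tm n"
  by (cases "n = 0") (simp_all add: tm.simps[of "2*n"])
lemma tm_odd[simp]: "tm (Suc (2*n)) = (\<not> tm n)"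
  by (simp add: tm.simps[of "Suc (2*n)"])
lemma tm_even2: "tm (Suc (Suc (2*n))) = tm (Suc n)"
  using tm_even[of "Suc n"] by simp
lemma tm_odd2: "tm (Suc (Suc (Suc (2*n)))) = (\<not> tm (Suc n))"
  using tm_odd[of "Suc n"] by simp

definition v :: "nat \<Rightarrow> nat" where
  "v i = (if tm i = tm (Suc i) then 1 else if tm (Suc i) then 2 else 0)"

definition LL :: "nat \<Rightarrow> nat" where "LL m = 2*m + (if tm m then 1 else 0)"

lemma morph_step: "vtm_morph (v m) = map v [LL m..<LL (Suc m)]"
proof -
  have e: "LL (Suc m) = Suc (Suc (2*m)) + (if tm (Suc m) then 1 else 0)"
    by (simp add: LL_def)
  show ?thesis
    by (cases "tm m"; cases "tm (Suc m)")
       (simp_all add: e LL_def v_def upt_rec tm_even2 tm_odd2)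
qed

lemma morph_prefix: "concat (map vtm_morph (map v [0..<m])) = map v [0..<LL m]"
proof (induction m)
  case 0 then show ?case by (simp add: LL_def)
next
  case (Suc m)
  have le: "LL m \<le> LL (Suc m)" by (simp add: LL_def)
  have "concat (map vtm_morph (map v [0..<Suc m])) = map v [0..<LL m] @ map v [LL m..<LL (Suc m)]"
    using Suc by (simp add: morph_step del: vtm_morph.simps)
  also have "\<dots> = map v [0..<LL (Suc m)]"
    using le by (metis map_append le0 le_add_diff_inverse upt_add_eq_append)
  finally show ?case .
qed

lemma iter_prefix: "\<exists>L. vtm_iter k = map v [0..<L] \<and> Suc k \<le> L"
proof (induction k)
  case 0
  have "v 0 = 2" using tm_odd[of 0] by (simp add: v_def)
  then show ?case by (intro exI[of _ 1]) (simp add: vtm_iter_def)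
next
  case (Suc k)
  then obtain L where L: "vtm_iter k = map v [0..<L]" "Suc k \<le> L" by blast
  have "vtm_iter (Suc k) = concat (map vtm_morph (vtm_iter k))"
    by (simp add: vtm_iter_def)
  also have "\<dots> = map v [0..<LL L]" using L(1) morph_prefix by simp
  finally show ?case using L(2) by (intro exI[of _ "LL L"]) (simp add: LL_def)
qed

lemma vtm_v: "vtm i = v i"
proof -
  obtain L where L: "vtm_iter (Suc i) = map v [0..<L]" "Suc (Suc i) \<le> L"
    using iter_prefix by blast
  then show ?thesis by (simp add: vtm_def)
qed

lemma vtm_prefix_v: "vtm_prefix n = map v [0..<n]"
  by (simp add: vtm_prefix_def vtm_v)

definition PP :: "nat \<Rightarrow> nat set \<Rightarrow> bool" where
  "PP n S \<longleftrightarrow> S \<subseteq> {..<n} \<and>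
     (\<forall>p d. 0 < d \<and> p + d \<le> n \<longrightarrow>
        (\<exists>p'. p' + d \<le> n \<and> (\<forall>j\<le>d. tm (p'+j) = tm (p+j)) \<and>
              (\<exists>i\<in>S. p' \<le> i \<and> i < p' + d)))"

lemma factor_map: "q < n \<Longrightarrow> factor (map v [0..<n]) p q = map v [p..<Suc q]"
  by (simp add: factor_def take_map drop_map)

lemma PP_attr: assumes "PP n S" shows "string_attractor (vtm_prefix n) S"
  unfolding string_attractor_def
proof (intro conjI allI impI)
  show "S \<subseteq> {..<length (vtm_prefix n)}" using assms by (simp add: PP_def vtm_prefix_v)
next
  fix p q assume pq: "p \<le> q \<and> q < length (vtm_prefix n)"
  hence pq': "p \<le> q" "q < n" by (auto simp: vtm_prefix_v)
  define d where "d = Suc q - p"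
  have "0 < d" "p + d \<le> n" using pq' by (auto simp: d_def)
  then obtain p' i where p': "p' + d \<le> n" "\<forall>j\<le>d. tm (p'+j) = tm (p+j)"
     "i \<in> S" "p' \<le> i" "i < p' + d"
    using assms unfolding PP_def by blast
  define q' where "q' = p' + (q - p)"
  have eqv: "\<forall>j<d. v (p'+j) = v (p+j)"
  proof (intro allI impI)
    fix j assume "j < d"
    then have "tm (p'+j) = tm (p+j)" "tm (Suc (p'+j)) = tm (Suc (p+j))"
      using p'(2) spec[OF p'(2), of j] spec[OF p'(2), of "Suc j"] by auto
    then show "v (p'+j) = v (p+j)" by (simp add: v_def del: add_Suc_right)
  qed
  have "map v [p'..<Suc q'] = map v [p..<Suc q]"
  proof (rule nth_equalityI)
    show "length (map v [p'..<Suc q']) = length (map v [p..<Suc q])"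
      using pq' by (simp add: q'_def del: upt_Suc)
  next
    fix j assume "j < length (map v [p'..<Suc q'])"
    then have "j < d" using pq' by (simp add: q'_def d_def del: upt_Suc)
    then show "map v [p'..<Suc q'] ! j = map v [p..<Suc q] ! j"
      using eqv pq' by (simp add: q'_def d_def nth_upt del: upt_Suc)
  qed
  then have "factor (vtm_prefix n) p' q' = factor (vtm_prefix n) p q"
    using pq' p'(1) by (simp add: vtm_prefix_v factor_map q'_def d_def)
  moreover have "p' \<le> q'" "q' < length (vtm_prefix n)"
    using pq' p'(1) by (auto simp: q'_def d_def vtm_prefix_v)
  moreover have "p' \<le> i" "i \<le> q'" using p' pq' by (auto simp: q'_def d_def)
  ultimately show "\<exists>p' q'. p' \<le> q' \<and> q' < length (vtm_prefix n) \<and>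
        factor (vtm_prefix n) p' q' = factor (vtm_prefix n) p q \<and> (\<exists>i\<in>S. p' \<le> i \<and> i \<le> q')"
    using p'(3) by blast
qed

lemma tm_2e: "e < 2 \<Longrightarrow> tm (2*x + e) = (if e = 0 then tm x else \<not> tm x)"
  by (cases e) auto

lemma scale_core:
  assumes P: "PP M S" and d: "0 < d" and ab: "p div 2 < (p+d) div 2" and bM: "(p+d) div 2 \<le> M"
  shows "\<exists>p'. p' + d \<le> 2*M + (p+d) mod 2 \<and> (\<forall>j\<le>d. tm (p'+j) = tm (p+j)) \<and>
              (\<exists>i\<in>S. p' \<le> 2*i+1 \<and> 2*i+1 < p' + d)"
proof -
  define a where "a = p div 2"
  define b where "b = (p+d) div 2"
  have "0 < b - a" "a + (b - a) \<le> M" using ab bM by (auto simp: a_def b_def)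
  then obtain a' i where a': "a' + (b-a) \<le> M" "\<forall>j\<le>b-a. tm (a'+j) = tm (a+j)"
    "i \<in> S" "a' \<le> i" "i < a' + (b-a)"
    using P unfolding PP_def by blast
  define p' where "p' = 2*a' + p mod 2"
  have pa: "p = 2*a + p mod 2" by (simp add: a_def)
  have pdb: "p + d = 2*b + (p+d) mod 2" by (simp add: b_def)
  have "p' + d = 2*(a' + (b-a)) + (p+d) mod 2"
  proof -
    have "a < b" using ab by (simp add: a_def b_def)
    moreover have "\<And>x y z w u (aa::nat). aa < b \<Longrightarrow> p = 2*aa + x \<Longrightarrow> p + d = 2*b + y \<Longrightarrow>
       2*a' + x + d = 2*(a' + (b - aa)) + y" by arith
    ultimately show ?thesis using pa pdb unfolding p'_def by blast
  qed
  also have "\<dots> \<le> 2*M + (p+d) mod 2" using a'(1) by simp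
  finally have bound: "p' + d \<le> 2*M + (p+d) mod 2" .
  have eq: "\<forall>j\<le>d. tm (p'+j) = tm (p+j)"
  proof (intro allI impI)
    fix j assume j: "j \<le> d"
    define r where "r = p mod 2 + j"
    have s: "r div 2 \<le> b - a" using j pa pdb unfolding r_def by linarith
    have e1: "p' + j = 2*(a' + r div 2) + r mod 2" unfolding p'_def r_def by simp
    have rr: "r = 2*(r div 2) + r mod 2" by simp
    have "p + j = 2*a + r" using pa unfolding r_def by linarith
    then have e2: "p + j = 2*(a + r div 2) + r mod 2" using rr
      by (metis add.assoc distrib_left)
    have "tm (a' + r div 2) = tm (a + r div 2)" using a'(2) s by blast
    moreover have "r mod 2 < 2" by simp
    ultimately have "tm (2*(a' + r div 2) + r mod 2) = tm (2*(a + r div 2) + r mod 2)"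
      by (simp only: tm_2e)
    then show "tm (p'+j) = tm (p+j)" unfolding e1 e2 .
  qed
  have "p' \<le> 2*i+1" using a'(4) by (simp add: p'_def)
  moreover have "2*i+1 < p' + d"
  proof -
    have "\<And>x y z. i < x \<Longrightarrow> z = 2*x + (y::nat) \<Longrightarrow> 2*i+1 < z" by arith
    then show ?thesis using a'(5) \<open>p' + d = 2*(a' + (b-a)) + (p+d) mod 2\<close> by blast
  qed
  ultimately show ?thesis using bound eq a'(3) by blast
qed

lemma PP_pair:
  assumes P: "PP M S" and M: "6 \<le> M"
  shows "\<exists>i\<in>S. tm i = c \<and> tm (Suc i) = c"
proof -
  have t1: "tm 1 = True" "tm 2 = True" "tm 5 = False" "tm 6 = False"
    using tm_odd[of 0] tm_even[of 1] tm_odd[of 2] tm_even[of 3] tm_odd[of 1] by (simp_all add: numeral_eq_Suc)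
  obtain p0 where p0: "p0 = (if c then 1 else 5::nat)" by blast
  have c1: "tm p0 = c" "tm (Suc p0) = c" using t1 p0 by (auto simp: numeral_eq_Suc)
  have "0 < (1::nat)" "p0 + 1 \<le> M" using M p0 by auto
  then obtain p' i where "\<forall>j\<le>1. tm (p'+j) = tm (p0+j)" "i \<in> S" "p' \<le> i" "i < p' + 1"
    using P unfolding PP_def by blast
  then show ?thesis using c1 by (metis add.right_neutral add_Suc_right le_refl less_Suc_eq_le
     one_add_one plus_1_eq_Suc le_antisym zero_le_one)
qed

lemma scale:
  assumes P: "PP n S" and n6: "6 \<le> n" and N: "N = 2*n+1 \<or> (N = 2*n+2 \<and> PP (Suc n) S)"
  shows "PP N ((\<lambda>i. 2*i+1) ` S)"
  unfolding PP_def
proof (intro conjI allI impI)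
  have "S \<subseteq> {..<n}" using P by (simp add: PP_def)
  then show "(\<lambda>i. 2*i+1) ` S \<subseteq> {..<N}" using N by auto
next
  fix p d assume pd: "0 < d \<and> p + d \<le> N"
  show "\<exists>p'. p' + d \<le> N \<and> (\<forall>j\<le>d. tm (p'+j) = tm (p+j)) \<and>
              (\<exists>i\<in>(\<lambda>i. 2*i+1) ` S. p' \<le> i \<and> i < p' + d)"
  proof (cases "p div 2 < (p+d) div 2")
    case True
    have "\<exists>p'. p' + d \<le> N \<and> (\<forall>j\<le>d. tm (p'+j) = tm (p+j)) \<and>
              (\<exists>i\<in>S. p' \<le> 2*i+1 \<and> 2*i+1 < p' + d)"
    proof (cases "p + d \<le> 2*n+1")
      case True
      have "(p+d) div 2 \<le> n" using True by linarith
      from scale_core[OF P _ \<open>p div 2 < (p+d) div 2\<close> this] pd obtain p' where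
        "p' + d \<le> 2*n + (p+d) mod 2" "(\<forall>j\<le>d. tm (p'+j) = tm (p+j))"
        "(\<exists>i\<in>S. p' \<le> 2*i+1 \<and> 2*i+1 < p' + d)" by blast
      moreover have "2*n + (p+d) mod 2 \<le> N" using N by auto
      ultimately show ?thesis by (meson order_trans)
    next
      case False
      then have NN: "N = 2*n+2" "PP (Suc n) S" "p + d = 2*n+2" using N pd by auto
      have "(p+d) div 2 \<le> Suc n" "(p+d) mod 2 = 0" using NN by auto
      from scale_core[OF NN(2) _ \<open>p div 2 < (p+d) div 2\<close> this(1)] pd this(2) NN(1) show ?thesis
        by auto
    qed
    then show ?thesis by blast
  next
    case False
    have d1: "d = 1" using False pd by presburger
    have pe: "p = 2*(p div 2)" using False pd by presburger
    define a where "a = p div 2"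
    obtain i where i: "i \<in> S" "tm i = (\<not> tm a)" "tm (Suc i) = (\<not> tm a)"
      using PP_pair[OF P n6, of "\<not> tm a"] by blast
    have "i < n" using i(1) P by (auto simp: PP_def)
    have "tm p = tm a" "tm (p+1) = (\<not> tm a)" using pe by (metis a_def tm_even, metis a_def tm_odd Suc_eq_plus1)
    moreover have "tm (2*i+1) = tm a" "tm (2*i+1+1) = (\<not> tm a)" using i tm_even2[of i] by auto
    ultimately have "\<forall>j\<le>d. tm (2*i+1+j) = tm (p+j)" using d1 by (auto simp: le_Suc_eq)
    moreover have "2*i+1 + d \<le> N" using \<open>i < n\<close> d1 N by auto
    ultimately show ?thesis using i(1) d1 by (intro exI[of _ "2*i+1"]) auto
  qed
qed

definition PPex :: "nat \<Rightarrow> nat list \<Rightarrow> bool" where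
  "PPex n Sl = (list_all (\<lambda>i. i < n) Sl \<and>
     list_all (\<lambda>p. list_all (\<lambda>d. list_ex (\<lambda>p'. list_all (\<lambda>j. tm (p'+j) = tm (p+j)) [0..<Suc d]
        \<and> list_ex (\<lambda>i. p' \<le> i \<and> i < p'+d) Sl) [0..<Suc (n-d)]) [1..<Suc (n-p)]) [0..<Suc n])"

lemma PPex_PP: assumes "PPex n Sl" shows "PP n (set Sl)"
  unfolding PP_def
proof (intro conjI allI impI)
  show "set Sl \<subseteq> {..<n}" using assms by (auto simp: PPex_def list_all_iff)
next
  fix p d assume pd: "0 < d \<and> p + d \<le> n"
  then have "p \<in> set [0..<Suc n]" "d \<in> set [1..<Suc (n-p)]" by auto
  then obtain p' where "p' \<in> set [0..<Suc (n-d)]" "list_all (\<lambda>j. tm (p'+j) = tm (p+j)) [0..<Suc d]"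
        "list_ex (\<lambda>i. p' \<le> i \<and> i < p'+d) Sl"
    using assms unfolding PPex_def list_all_iff list_ex_iff by blast
  then show "\<exists>p'. p' + d \<le> n \<and> (\<forall>j\<le>d. tm (p'+j) = tm (p+j)) \<and> (\<exists>i\<in>set Sl. p' \<le> i \<and> i < p' + d)"
    using pd by (intro exI[of _ p']) (auto simp: list_all_iff list_ex_iff)
qed


definition QQ :: "nat \<Rightarrow> bool" where
  "QQ n \<longleftrightarrow> (\<exists>S. card S = 4 \<and> PP n S \<and> PP (Suc n) S)"

lemma QQ_step: assumes "QQ n" "6 \<le> n" shows "QQ (2*n+1)" "QQ (2*n+2)"
proof -
  obtain S where S: "card S = 4" "PP n S" "PP (Suc n) S" using assms(1) by (auto simp: QQ_def)
  have inj: "inj_on (\<lambda>i. 2*i+1::nat) S" by (auto simp: inj_on_def)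
  have c: "card ((\<lambda>i. 2*i+1) ` S) = 4" using card_image[OF inj] S(1) by simp
  have a: "PP (2*n+1) ((\<lambda>i. 2*i+1) ` S)" using scale[OF S(2) assms(2)] by simp
  have b: "PP (2*n+2) ((\<lambda>i. 2*i+1) ` S)" using scale[OF S(2) assms(2)] S(3) by simp
  have c3: "PP (2*(Suc n)+1) ((\<lambda>i. 2*i+1) ` S)" using scale[OF S(3)] assms(2) by simp
  show "QQ (2*n+1)" unfolding QQ_def using a b c by (intro exI[of _ "(\<lambda>i. 2*i+1) ` S"]) simp
  show "QQ (2*n+2)" unfolding QQ_def using b c3 c by (intro exI[of _ "(\<lambda>i. 2*i+1) ` S"]) simp
qed

lemma QQ_ex: "PPex n Sl \<Longrightarrow> PPex (Suc n) Sl \<Longrightarrow> card (set Sl) = 4 \<Longrightarrow> QQ n"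
  unfolding QQ_def using PPex_PP by blast

lemma QQ_base: "6 \<le> n \<Longrightarrow> n \<le> 12 \<Longrightarrow> QQ n"
proof -
  assume "6 \<le> n" "n \<le> 12"
  then have "n \<in> {6,7,8,9,10,11,12}" by auto
  moreover have "QQ 6" by (rule QQ_ex[of _ "[1,2,3,5]"]; code_simp)
  moreover have "QQ 7" by (rule QQ_ex[of _ "[1,2,3,5]"]; code_simp)
  moreover have "QQ 8" by (rule QQ_ex[of _ "[1,2,3,5]"]; code_simp)
  moreover have "QQ 9" by (rule QQ_ex[of _ "[2,3,5,7]"]; code_simp)
  moreover have "QQ 10" by (rule QQ_ex[of _ "[2,3,5,7]"]; code_simp)
  moreover have "QQ 11" by (rule QQ_ex[of _ "[2,3,7,9]"]; code_simp)
  moreover have "QQ 12" by (rule QQ_ex[of _ "[3,5,7,11]"]; code_simp)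
  ultimately show "QQ n" by auto
qed

lemma QQ_all: "6 \<le> n \<Longrightarrow> QQ n"
proof (induction n rule: less_induct)
  case (less n)
  show ?case
  proof (cases "n \<le> 12")
    case True then show ?thesis using QQ_base less.prems by auto
  next
    case False
    show ?thesis
    proof (cases "odd n")
      case True
      then obtain m where m: "n = 2*m+1" by (metis oddE)
      then have "QQ m" using less.IH False by auto
      then show ?thesis using QQ_step(1)[of m] m False by auto
    next
      case False
      then obtain k where "n = 2*k" by auto
      then obtain m where m: "n = 2*m+2" using \<open>\<not> n \<le> 12\<close>
        by (intro that[of "k - 1"]) simp
      then have "QQ m" using less.IH \<open>\<not> n \<le> 12\<close> by auto
      then show ?thesis using QQ_step(2)[of m] m \<open>\<not> n \<le> 12\<close> by auto
    qed
  qed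
qed

lemma upper_big: "7 \<le> n \<Longrightarrow> \<exists>S. string_attractor (vtm_prefix n) S \<and> card S = 4"
  using QQ_all[of n] PP_attr unfolding QQ_def by auto

definition Aex :: "nat list \<Rightarrow> nat list \<Rightarrow> bool" where
  "Aex w Sl = (list_all (\<lambda>i. i < length w) Sl \<and>
     list_all (\<lambda>p. list_all (\<lambda>q. list_ex (\<lambda>p'. p' + (q-p) < length w \<and>
        factor w p' (p'+(q-p)) = factor w p q \<and> list_ex (\<lambda>i. p' \<le> i \<and> i \<le> p'+(q-p)) Sl)
       [0..<length w]) [p..<length w]) [0..<length w])"

lemma Aex_attr: assumes "Aex w Sl" shows "string_attractor w (set Sl)"
  unfolding string_attractor_def
proof (intro conjI allI impI)
  show "set Sl \<subseteq> {..<length w}" using assms by (auto simp: Aex_def list_all_iff)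
next
  fix p q assume pq: "p \<le> q \<and> q < length w"
  then have "p \<in> set [0..<length w]" "q \<in> set [p..<length w]" by auto
  then obtain p' where "p' + (q-p) < length w" "factor w p' (p'+(q-p)) = factor w p q"
     "list_ex (\<lambda>i. p' \<le> i \<and> i \<le> p'+(q-p)) Sl"
    using assms unfolding Aex_def list_all_iff list_ex_iff by blast
  then show "\<exists>p' q'. p' \<le> q' \<and> q' < length w \<and> factor w p' q' = factor w p q \<and>
     (\<exists>i\<in>set Sl. p' \<le> i \<and> i \<le> q')"
    by (intro exI[of _ p'] exI[of _ "p'+(q-p)"]) (auto simp: list_ex_iff)
qed

lemma small_upper:
  assumes "1 \<le> n" "n \<le> 6"
  shows "\<exists>S. string_attractor (vtm_prefix n) S \<and> card S = (if n = 1 then 1 else if n = 2 then 2 else 3)"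
proof -
  have "n \<in> {1,2,3,4,5,6}" using assms by auto
  moreover have "string_attractor (vtm_prefix 1) (set [0])"
    by (rule Aex_attr) (simp add: vtm_prefix_v; code_simp)
  moreover have "string_attractor (vtm_prefix 2) (set [0,1])"
    by (rule Aex_attr) (simp add: vtm_prefix_v; code_simp)
  moreover have "string_attractor (vtm_prefix 3) (set [0,1,2])"
    by (rule Aex_attr) (simp add: vtm_prefix_v; code_simp)
  moreover have "string_attractor (vtm_prefix 4) (set [0,1,2])"
    by (rule Aex_attr) (simp add: vtm_prefix_v; code_simp)
  moreover have "string_attractor (vtm_prefix 5) (set [1,2,3])"
    by (rule Aex_attr) (simp add: vtm_prefix_v; code_simp)
  moreover have "string_attractor (vtm_prefix 6) (set [1,3,4])"
    by (rule Aex_attr) (simp add: vtm_prefix_v; code_simp)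
  ultimately show ?thesis by (auto intro!: exI)
qed

lemma factor_len: "p \<le> q \<Longrightarrow> q < length w \<Longrightarrow> length (factor w p q) = Suc q - p"
  by (simp add: factor_def)

lemma factor_nth: "p \<le> q \<Longrightarrow> q < length w \<Longrightarrow> j \<le> q - p \<Longrightarrow> factor w p q ! j = w ! (p + j)"
  by (simp add: factor_def)

lemma attr_letter:
  assumes "string_attractor w S" "p < length w"
  shows "\<exists>i\<in>S. i < length w \<and> w ! i = w ! p"
proof -
  obtain p' q' i where o: "p' \<le> q'" "q' < length w" "factor w p' q' = factor w p p" "i \<in> S" "p' \<le> i" "i \<le> q'"
    using assms unfolding string_attractor_def by blast
  have "length (factor w p' q') = 1" using o(3) factor_len[of p p w] assms(2) by simp
  then have "q' = p'" using factor_len[OF o(1,2)] by simp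
  then have "i = p'" using o by simp
  have "factor w p' q' ! 0 = factor w p p ! 0" using o(3) by simp
  then have "w ! p' = w ! p" using factor_nth[OF o(1,2), of 0] factor_nth[of p p w 0] assms(2) by simp
  then show ?thesis using o \<open>i = p'\<close> by (intro bexI[of _ p']) auto
qed

lemma attr_pair:
  assumes "string_attractor w S" "Suc p < length w"
  shows "\<exists>p'. Suc p' < length w \<and> w ! p' = w ! p \<and> w ! Suc p' = w ! Suc p \<and> (p' \<in> S \<or> Suc p' \<in> S)"
proof -
  have pp: "p \<le> Suc p" by simp
  obtain p' q' i where o: "p' \<le> q'" "q' < length w" "factor w p' q' = factor w p (Suc p)" "i \<in> S" "p' \<le> i" "i \<le> q'"
    using assms unfolding string_attractor_def by (meson pp)
  have "length (factor w p' q') = 2" using o(3) factor_len[OF pp assms(2)] by simp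
  then have q: "q' = Suc p'" using factor_len[OF o(1,2)] by simp
  have "factor w p' q' ! 0 = factor w p (Suc p) ! 0" "factor w p' q' ! 1 = factor w p (Suc p) ! 1" using o(3) by simp_all
  then have "w ! p' = w ! p" "w ! Suc p' = w ! Suc p"
    using factor_nth[OF o(1,2), of 0] factor_nth[OF o(1,2), of 1] factor_nth[OF pp assms(2), of 0]
      factor_nth[OF pp assms(2), of 1] q by simp_all
  moreover have "p' \<in> S \<or> Suc p' \<in> S" using o q by (metis le_SucE le_antisym)
  ultimately show ?thesis using o(2) q by blast
qed

lemma no3: "\<not> (tm k = tm (Suc k) \<and> tm (Suc k) = tm (Suc (Suc k)))"
proof (cases "even k")
  case True then obtain m where "k = 2*m" by auto
  then show ?thesis by simp
next
  case False then obtain m where "k = Suc (2*m)" by (metis oddE Suc_eq_plus1)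
  then show ?thesis using tm_even2[of m] tm_odd2[of m] by simp
qed

lemma v_one: assumes "v i = 1" "0 < i" shows "v (i - 1) \<noteq> v (Suc i)"
proof -
  obtain k where k: "i = Suc k" using assms(2) by (cases i) auto
  have a: "\<not> (tm k = tm (Suc k) \<and> tm (Suc k) = tm (Suc (Suc k)))" by (rule no3)
  have b: "\<not> (tm (Suc k) = tm (Suc (Suc k)) \<and> tm (Suc (Suc k)) = tm (Suc (Suc (Suc k))))" by (rule no3)
  show ?thesis using assms a b unfolding k v_def by (auto split: if_splits)
qed

lemma v_first: "map v [0..<7] = [2,1,0,2,0,1,2]" by code_simp

lemma pv_nth: "i < n \<Longrightarrow> vtm_prefix n ! i = v i" by (simp add: vtm_prefix_v)

lemma v0: "v 0 = 2" by code_simp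
lemma v1: "v 1 = 1" by code_simp
lemma v2: "v 2 = 0" by code_simp
lemma v3: "v 3 = 2" by code_simp
lemma v4: "v 4 = 0" by code_simp
lemma v5: "v 5 = 1" by code_simp
lemma v6: "v 6 = 2" by code_simp

lemma letter_v:
  assumes "string_attractor (vtm_prefix n) S" "p < n"
  shows "\<exists>i\<in>S. i < n \<and> v i = v p"
  using attr_letter[OF assms(1), of p] assms(2) by (auto simp: pv_nth vtm_prefix_v)

lemma pair_fact:
  assumes A: "string_attractor (vtm_prefix n) S" and S: "S = {a,b,c}" and p: "Suc p < n"
    and d: "v a \<noteq> v b" "v a \<noteq> v c" "v b \<noteq> v c" and pa: "v p = v a" and pb: "v (Suc p) = v b"
  shows "(Suc a < n \<and> v (Suc a) = v b) \<or> (0 < b \<and> v (b - 1) = v a)"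
proof -
  obtain p' where o: "Suc p' < n" "v p' = v p" "v (Suc p') = v (Suc p)" "p' \<in> S \<or> Suc p' \<in> S"
    using attr_pair[OF A, of p] p by (auto simp: pv_nth vtm_prefix_v)
  show ?thesis
  proof (cases "p' \<in> S")
    case True
    then have "p' = a" using S o(2) pa d by auto
    then show ?thesis using o pb by auto
  next
    case False
    then have "Suc p' = b" using S o pb d by auto
    then show ?thesis using o pa by auto
  qed
qed

lemma lower:
  assumes A: "string_attractor (vtm_prefix n) S" and n1: "1 \<le> n"
  shows "(if n = 1 then 1 else if n = 2 then 2 else if n \<le> 6 then 3 else 4) \<le> card S"
proof -
  have fin: "finite S" using A unfolding string_attractor_def by (meson finite_lessThan finite_subset)
  obtain i2 where i2: "i2 \<in> S" "i2 < n" "v i2 = 2" using letter_v[OF A, of 0] n1 v0 by auto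
  have c1: "1 \<le> card S" using fin i2(1) by (metis One_nat_def Suc_leI card_gt_0_iff empty_iff)
  show ?thesis
  proof (cases "n = 1")
    case True then show ?thesis using c1 by simp
  next
    case False
    then have n2: "2 \<le> n" using n1 by simp
    obtain i1 where i1: "i1 \<in> S" "i1 < n" "v i1 = 1" using letter_v[OF A, of 1] n2 v1 by auto
    have "i1 \<noteq> i2" using i1 i2 by auto
    then have "card {i1, i2} = 2" by simp
    moreover have "{i1,i2} \<subseteq> S" using i1 i2 by auto
    ultimately have c2: "2 \<le> card S" using fin by (metis card_mono)
    show ?thesis
    proof (cases "n = 2")
      case True then show ?thesis using c2 by simp
    next
      case False
      then have n3: "3 \<le> n" using n2 by simp
      obtain i0 where i0: "i0 \<in> S" "i0 < n" "v i0 = 0" using letter_v[OF A, of 2] n3 v2 by auto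
      have "i0 \<noteq> i1" "i0 \<noteq> i2" "i1 \<noteq> i2" using i0 i1 i2 by auto
      then have "card {i0, i1, i2} = 3" by simp
      moreover have sub: "{i0,i1,i2} \<subseteq> S" using i0 i1 i2 by auto
      ultimately have c3: "3 \<le> card S" using fin by (metis card_mono)
      show ?thesis
      proof (cases "n \<le> 6")
        case True then show ?thesis using c3 n3 by simp
      next
        case False
        then have n7: "7 \<le> n" by simp
        have "4 \<le> card S"
        proof (rule ccontr)
          assume "\<not> 4 \<le> card S"
          then have "card S = card {i0,i1,i2}" using c3 \<open>card {i0,i1,i2} = 3\<close> by simp
          then have S: "S = {i0,i1,i2}" using card_subset_eq[OF fin sub] by simp
          have S1: "S = {i1,i0,i2}" "S = {i2,i0,i1}" "S = {i0,i2,i1}" "S = {i1,i2,i0}" "S = {i2,i1,i0}"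
            using S by auto
          have F02: "(Suc i0 < n \<and> v (Suc i0) = 2) \<or> (0 < i2 \<and> v (i2 - 1) = 0)"
            using pair_fact[OF A S1(3), of 2] i0 i1 i2 n7 v2 v3 by (simp add: numeral_eq_Suc)
          have F20: "(Suc i2 < n \<and> v (Suc i2) = 0) \<or> (0 < i0 \<and> v (i0 - 1) = 2)"
            using pair_fact[OF A S1(2), of 3] i0 i1 i2 n7 v3 v4 by (simp add: numeral_eq_Suc)
          have F01: "(Suc i0 < n \<and> v (Suc i0) = 1) \<or> (0 < i1 \<and> v (i1 - 1) = 0)"
            using pair_fact[OF A S(1), of 4] i0 i1 i2 n7 v4 v5 by (simp add: numeral_eq_Suc)
          have F10: "(Suc i1 < n \<and> v (Suc i1) = 0) \<or> (0 < i0 \<and> v (i0 - 1) = 1)"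
            using pair_fact[OF A S1(1), of 1] i0 i1 i2 n7 v1 v2 by (simp add: numeral_eq_Suc)
          have F12: "(Suc i1 < n \<and> v (Suc i1) = 2) \<or> (0 < i2 \<and> v (i2 - 1) = 1)"
            using pair_fact[OF A S1(4), of 5] i0 i1 i2 n7 v5 v6 by (simp add: numeral_eq_Suc)
          have F21: "(Suc i2 < n \<and> v (Suc i2) = 1) \<or> (0 < i1 \<and> v (i1 - 1) = 2)"
            using pair_fact[OF A S1(5), of 0] i0 i1 i2 n7 v0 v1 by (simp add: numeral_eq_Suc)
          have NB: "0 < i1 \<Longrightarrow> v (i1 - 1) \<noteq> v (Suc i1)" using v_one i1(3) by blast
          show False using F02 F20 F01 F10 F12 F21 NB by auto
        qed
        then show ?thesis using n7 by simp
      qed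
    qed
  qed
qed

theorem theorem7:
  fixes n :: nat
  assumes "n \<ge> 1"
  shows "min_attractor_size (vtm_prefix n) =
           (if n = 1 then 1 else if n = 2 then 2 else if n \<le> 6 then 3 else 4)"
proof -
  let ?k = "(if n = 1 then 1 else if n = 2 then 2 else if n \<le> 6 then 3 else 4) :: nat"
  have ex: "\<exists>S. string_attractor (vtm_prefix n) S \<and> card S = ?k"
  proof (cases "n \<le> 6")
    case True then show ?thesis using small_upper[OF assms True] by auto
  next
    case False then show ?thesis using upper_big[of n] by auto
  qed
  show ?thesis unfolding min_attractor_size_def
  proof (rule Least_equality)
    show "\<exists>S. string_attractor (vtm_prefix n) S \<and> card S = ?k" by (rule ex)
  next
    fix y assume "\<exists>S. string_attractor (vtm_prefix n) S \<and> card S = y"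
    then obtain S where "string_attractor (vtm_prefix n) S" "card S = y" by blast
    then show "?k \<le> y" using lower[OF _ assms] by blast
  qed
qed

end
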